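(* Let $n\in\mathbf{N}$ and $A\subset[n]$ have property P. For each $a\in A\cap[1,\frac{2n}{3}]$ let $j_a\geqslant0$ be the unique integer with $2^{j_a}a\in\left(\frac n3,\frac{2n}{3}\right]$, and let $B_1=\{2^{j_a}a:a\in A\cap[1,\frac{2n}{3}]\}$. Let $A'''=\{m\in\mathbf{N}:3m\in A_{(\frac12,1]}+A_{(\frac12,1]}\}$. Then $|B_1|=\left|A\cap[1,\frac{2n}{3}]\right|$, $B_1$ and $A'''$ are disjoint subsets of $\left(\frac n3,\frac{2n}{3}\right]$, and consequently $|B_1|+|A'''|\leqslant\left\lceil\frac n3\right\rceil$.
   Context: A set $A\subset\mathbf{N}$ has property P if there are no $x,y,z\in A$ (not necessarily distinct $x,y$) with $z<x$, $z<y$ and $z\mid x+y$. $A_{(\alpha,\beta]}=A\cap(\alpha n,\beta n]$, where intervals denote sets of integers. *)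

theory Defs
  imports Complex_Main
begin

definition propP :: "nat set \<Rightarrow> bool" where
  "propP A \<longleftrightarrow> (\<forall>x\<in>A. \<forall>y\<in>A. \<forall>z\<in>A. z < x \<and> z < y \<longrightarrow> \<not> z dvd (x + y))"

definition Aint :: "nat set \<Rightarrow> nat \<Rightarrow> real \<Rightarrow> real \<Rightarrow> nat set" where
  "Aint A n \<alpha> \<beta> = {x \<in> A. \<alpha> * real n < real x \<and> real x \<le> \<beta> * real n}"

definition midThird :: "nat \<Rightarrow> nat set" where
  "midThird n = {m. real n / 3 < real m \<and> real m \<le> 2 * real n / 3}"

definition lowPart :: "nat set \<Rightarrow> nat \<Rightarrow> nat set" where
  "lowPart A n = {a \<in> A. 1 \<le> a \<and> real a \<le> 2 * real n / 3}"

definition jexp :: "nat \<Rightarrow> nat \<Rightarrow> nat" where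
  "jexp n a = (THE j. 2 ^ j * a \<in> midThird n)"

definition B1 :: "nat set \<Rightarrow> nat \<Rightarrow> nat set" where
  "B1 A n = (\<lambda>a. 2 ^ jexp n a * a) ` lowPart A n"

definition A3 :: "nat set \<Rightarrow> nat \<Rightarrow> nat set" where
  "A3 A n = {m. 1 \<le> m \<and> (\<exists>x\<in>Aint A n (1/2) 1. \<exists>y\<in>Aint A n (1/2) 1. 3 * m = x + y)}"

end

theory Submission
  imports Defs
begin

lemma mid_iff: "m \<in> midThird n \<longleftrightarrow> n < 3*m \<and> 3*m \<le> 2*n"
proof -
  have "(real n / 3 < real m) = (real n < real (3*m))" by (simp add: field_simps)
  moreover have "(real m \<le> 2 * real n / 3) = (real (3*m) \<le> real (2*n))" by (simp add: field_simps)
  ultimately show ?thesis unfolding midThird_def by (simp only: mem_Collect_eq of_nat_less_iff of_nat_le_iff)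
qed

lemma low_iff: "a \<in> lowPart A n \<longleftrightarrow> a \<in> A \<and> 1 \<le> a \<and> 3*a \<le> 2*n"
proof -
  have "(real a \<le> 2 * real n / 3) = (real (3*a) \<le> real (2*n))" by (simp add: field_simps)
  then show ?thesis unfolding lowPart_def by (simp only: mem_Collect_eq of_nat_le_iff)
qed

lemma aint_iff: "x \<in> Aint A n (1/2) 1 \<longleftrightarrow> x \<in> A \<and> n < 2*x \<and> x \<le> n"
proof -
  have "(1/2 * real n < real x) = (real n < real (2*x))" by (simp add: field_simps)
  then show ?thesis unfolding Aint_def by (simp only: mem_Collect_eq of_nat_less_iff of_nat_le_iff mult_1)
qed

lemma ex_j: "1 \<le> a \<Longrightarrow> 3*a \<le> 2*n \<Longrightarrow> \<exists>j. n < 3*(2^j*a) \<and> 3*(2^j*a) \<le> 2*(n::nat)"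
proof (induction "2*n - 3*a" arbitrary: a rule: less_induct)
  case less
  show ?case
  proof (cases "n < 3*a")
    case True then show ?thesis using less.prems by (intro exI[of _ 0]) auto
  next
    case False
    then have "3*(2*a) \<le> 2*n" by simp
    moreover have "2*n - 3*(2*a) < 2*n - 3*a" using less.prems False by simp
    ultimately obtain j where "n < 3*(2^j*(2*a)) \<and> 3*(2^j*(2*a)) \<le> 2*n"
      using less.hyps[of "2*a"] less.prems by auto
    then show ?thesis by (intro exI[of _ "Suc j"]) (simp add: mult.assoc mult.left_commute)
  qed
qed

lemma uniq_j:
  assumes "n < 3*(2^j*a)" "3*(2^j*a) \<le> 2*(n::nat)" "n < 3*(2^k*a)" "3*(2^k*a) \<le> 2*n"
  shows "j = k"
proof (rule ccontr)
  assume "j \<noteq> k"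
  then consider "j < k" | "k < j" by linarith
  then show False
  proof cases
    case 1
    then have "2^(Suc j) \<le> (2::nat)^k" by (intro power_increasing) auto
    then have "2*(2^j*a) \<le> 2^k*a" by (simp add: mult_right_mono)
    then show False using assms by linarith
  next
    case 2
    then have "2^(Suc k) \<le> (2::nat)^j" by (intro power_increasing) auto
    then have "2*(2^k*a) \<le> 2^j*a" by (simp add: mult_right_mono)
    then show False using assms by linarith
  qed
qed

lemma jexp_prop:
  assumes "1 \<le> a" "3*a \<le> 2*n"
  shows "n < 3*(2^jexp n a*a) \<and> 3*(2^jexp n a*a) \<le> 2*n"
proof -
  obtain j where j: "n < 3*(2^j*a) \<and> 3*(2^j*a) \<le> 2*n" using ex_j assms by blast
  have "2 ^ jexp n a * a \<in> midThird n"
    unfolding jexp_def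
    by (rule theI[of _ j]) (use j uniq_j in \<open>auto simp: mid_iff\<close>)
  then show ?thesis by (simp add: mid_iff)
qed

lemma inj_aux:
  assumes P: "propP A" and a: "a \<in> A" and b: "b \<in> A" and "b \<ge> 1"
    and "j < k" and eq: "2^j*a = 2^k*(b::nat)"
  shows False
proof -
  have "2^k*b = 2^j*(2^(k-j)*b)" using \<open>j<k\<close> by (simp add: power_add[symmetric])
  then have "2^j*a = 2^j*(2^(k-j)*b)" using eq by simp
  then have ab: "a = 2^(k-j)*b" by simp
  have "2 \<le> (2::nat)^(k-j)" using \<open>j<k\<close>
    using power_increasing[of 1 "k-j" "2::nat"] by simp
  then have "2*b \<le> 2^(k-j)*b" by (rule mult_right_mono) simp
  then have "b < a" using ab \<open>b\<ge>1\<close> by linarith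
  moreover have "b dvd a + a" using ab by simp
  ultimately show False using P a b unfolding propP_def by blast
qed

theorem mainTheorem11:
  fixes n :: nat and A :: "nat set"
  assumes "A \<subseteq> {1..n}" and "propP A"
  shows "(\<forall>a\<in>lowPart A n. \<exists>!j::nat. 2 ^ j * a \<in> midThird n)
    \<and> card (B1 A n) = card (lowPart A n)
    \<and> B1 A n \<subseteq> midThird n \<and> A3 A n \<subseteq> midThird n
    \<and> B1 A n \<inter> A3 A n = {}
    \<and> card (B1 A n) + card (A3 A n) \<le> nat \<lceil>real n / 3\<rceil>"
proof -
  have S1: "\<forall>a\<in>lowPart A n. \<exists>!j::nat. 2 ^ j * a \<in> midThird n"
  proof
    fix a assume "a \<in> lowPart A n"
    then have a: "1 \<le> a" "3*a \<le> 2*n" by (auto simp: low_iff)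
    obtain j where j: "n < 3*(2^j*a) \<and> 3*(2^j*a) \<le> 2*n" using ex_j a by blast
    show "\<exists>!j::nat. 2 ^ j * a \<in> midThird n"
      by (rule ex1I[of _ j]) (use j uniq_j in \<open>auto simp: mid_iff\<close>)
  qed
  have inj: "inj_on (\<lambda>a. 2 ^ jexp n a * a) (lowPart A n)"
  proof (rule inj_onI)
    fix a b assume ab: "a \<in> lowPart A n" "b \<in> lowPart A n"
      and eq: "2 ^ jexp n a * a = 2 ^ jexp n b * b"
    then have A: "a \<in> A" "b \<in> A" "a \<ge> 1" "b \<ge> 1" by (auto simp: low_iff)
    consider "jexp n a < jexp n b" | "jexp n b < jexp n a" | "jexp n a = jexp n b" by linarith
    then show "a = b"
    proof cases
      case 1 then show ?thesis using inj_aux[OF assms(2) A(1) A(2) A(4) 1 eq] by blast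
    next
      case 2 then show ?thesis using inj_aux[OF assms(2) A(2) A(1) A(3) 2 eq[symmetric]] by blast
    next
      case 3 then show ?thesis using eq by simp
    qed
  qed
  have S2: "card (B1 A n) = card (lowPart A n)"
    unfolding B1_def using card_image[OF inj] .
  have S3: "B1 A n \<subseteq> midThird n"
    unfolding B1_def using jexp_prop by (auto simp: low_iff mid_iff)
  have S4: "A3 A n \<subseteq> midThird n"
  proof
    fix m assume "m \<in> A3 A n"
    then obtain x y where "3*m = x+y" "n < 2*x" "x \<le> n" "n < 2*y" "y \<le> n"
      unfolding A3_def by (auto simp: aint_iff)
    then show "m \<in> midThird n" by (simp add: mid_iff)
  qed
  have S5: "B1 A n \<inter> A3 A n = {}"
  proof (rule ccontr)
    assume "B1 A n \<inter> A3 A n \<noteq> {}"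
    then obtain a m where a: "a \<in> lowPart A n" and m: "m = 2 ^ jexp n a * a" and mA: "m \<in> A3 A n"
      unfolding B1_def by auto
    from a have aA: "a \<in> A" "1 \<le> a" "3*a \<le> 2*n" by (auto simp: low_iff)
    obtain x y where xy: "3*m = x+y" "n < 2*x" "x \<le> n" "n < 2*y" "y \<le> n" "x \<in> A" "y \<in> A"
      using mA unfolding A3_def by (auto simp: aint_iff)
    have "1 \<le> (2::nat)^jexp n a" by simp
    then have am: "a \<le> m" using m by (metis mult_le_mono1 mult_1)
    have "m dvd 3*m" by simp
    then have "a dvd x + y" using m xy(1) by (metis dvd_mult_left mult.commute dvd_trans dvd_triv_right)
    moreover have "a < x" using am xy by linarith
    moreover have "a < y" using am xy by linarith
    ultimately show False using assms(2) aA xy unfolding propP_def by blast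
  qed
  have fin: "finite (midThird n)"
    by (rule finite_subset[of _ "{..n}"]) (auto simp: mid_iff)
  have mideq: "midThird n = {n div 3 <.. 2*n div 3}" by (auto simp: mid_iff)
  have cm: "card (midThird n) \<le> nat \<lceil>real n / 3\<rceil>"
  proof -
    have "card (midThird n) = 2*n div 3 - n div 3" by (simp add: mideq)
    also have "\<dots> \<le> (n + 2) div 3" by linarith
    also have "int ((n+2) div 3) = \<lceil>real n / 3\<rceil>"
    proof -
      have "\<lceil>real n / 3\<rceil> = \<lceil>real_of_int (int n) / of_int 3\<rceil>" by simp
      also have "\<dots> = - (- int n div 3)" by (rule ceiling_divide_eq_div)
      also have "\<dots> = int ((n+2) div 3)" by linarith
      finally show ?thesis by simp
    qed
    finally show ?thesis by linarith
  qed
  have "card (B1 A n) + card (A3 A n) = card (B1 A n \<union> A3 A n)"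
    using S3 S4 S5 fin by (simp add: card_Un_disjoint finite_subset)
  also have "\<dots> \<le> card (midThird n)" using S3 S4 fin by (intro card_mono) auto
  finally have S6: "card (B1 A n) + card (A3 A n) \<le> nat \<lceil>real n / 3\<rceil>" using cm by linarith
  show ?thesis using S1 S2 S3 S4 S5 S6 by blast
qed

end
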